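(* Let $q\ge2$ and $b\in\mathbb{R}$, and let $U_C(b)$ be the operator on $\mathbb{C}^q\otimes\mathbb{C}^q$ with $\langle k\alpha|U_C(b)|j\beta\rangle=\frac1q\exp(\frac{2\pi i}{q}[bj\beta+(k\beta+j\alpha)])$, $k,\alpha,j,\beta\in\{0,\dots,q-1\}$. Then $U_C(b)=(F_q\otimes F_q)\,S\,D(b)$, where $F_q$ is the $q$-dimensional discrete Fourier transform and $D(b)$ is the diagonal unitary $\langle k\alpha|D(b)|j\beta\rangle=e^{2\pi i bj\beta/q}\delta_{kj}\delta_{\alpha\beta}$; consequently $U_C(b)$ is dual-unitary for every real $b$, and $e_p(U_C(b))\le\frac{q}{q+1}$, with equality for $b=1$.
   Context: Product basis $|i\alpha\rangle$; realignment $\langle\beta\alpha|X^{R_1}|ji\rangle=\langle i\alpha|X|j\beta\rangle$; a unitary is dual-unitary if its realignment is unitary. $S$ is the swap operator; $F_q$ has entries $\langle m|F_q|n\rangle=q^{-1/2}e^{2\pi i mn/q}$. $E(U)=1-q^{-4}\operatorname{tr}[(U^{R_1}U^{R_1\dagger})^2]$, $E(S)=1-1/q^2$, $e_p(U)=\frac{E(U)+E(US)-E(S)}{E(S)}$. *)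

theory Defs
  imports "HOL-Analysis.Analysis"
begin

text \<open>Operators on C^q (x) C^q are represented by their matrix entries in the product
basis: X (i,a) (j,b) is the entry <i a|X|j b>. Only indices in idx q matter.\<close>

type_synonym op2 = "nat \<times> nat \<Rightarrow> nat \<times> nat \<Rightarrow> complex"

definition idx :: "nat \<Rightarrow> (nat \<times> nat) set" where
  "idx q = {0..<q} \<times> {0..<q}"

definition opmult :: "nat \<Rightarrow> op2 \<Rightarrow> op2 \<Rightarrow> op2" where
  "opmult q X Y = (\<lambda>a c. \<Sum>b\<in>idx q. X a b * Y b c)"

definition opadj :: "op2 \<Rightarrow> op2" where
  "opadj X = (\<lambda>a b. cnj (X b a))"

definition opid :: op2 where
  "opid = (\<lambda>a b. if a = b then 1 else 0)"

definition opeq :: "nat \<Rightarrow> op2 \<Rightarrow> op2 \<Rightarrow> bool" where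
  "opeq q X Y \<longleftrightarrow> (\<forall>a\<in>idx q. \<forall>c\<in>idx q. X a c = Y a c)"

definition unitary_op :: "nat \<Rightarrow> op2 \<Rightarrow> bool" where
  "unitary_op q X \<longleftrightarrow> opeq q (opmult q X (opadj X)) opid \<and> opeq q (opmult q (opadj X) X) opid"

definition realign :: "op2 \<Rightarrow> op2" where
  "realign X = (\<lambda>(\<beta>, \<alpha>) (j, i). X (i, \<alpha>) (j, \<beta>))"

definition dual_unitary :: "nat \<Rightarrow> op2 \<Rightarrow> bool" where
  "dual_unitary q U \<longleftrightarrow> unitary_op q U \<and> unitary_op q (realign U)"

definition swap_op :: op2 where
  "swap_op = (\<lambda>(i, \<alpha>) (j, \<beta>). if i = \<beta> \<and> \<alpha> = j then 1 else 0)"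

definition tensor_op :: "(nat \<Rightarrow> nat \<Rightarrow> complex) \<Rightarrow> (nat \<Rightarrow> nat \<Rightarrow> complex) \<Rightarrow> op2" where
  "tensor_op A B = (\<lambda>(i, \<alpha>) (j, \<beta>). A i j * B \<alpha> \<beta>)"

definition dft :: "nat \<Rightarrow> nat \<Rightarrow> nat \<Rightarrow> complex" where
  "dft q m n = exp (2 * pi * \<i> * of_nat (m * n) / of_nat q) / complex_of_real (sqrt (real q))"

definition optrace :: "nat \<Rightarrow> op2 \<Rightarrow> complex" where
  "optrace q X = (\<Sum>a\<in>idx q. X a a)"

text \<open>E(U) = 1 - q^-4 tr[(U^R U^R\<dagger>)^2]; the trace is real, we take its real part.\<close>
definition Ent :: "nat \<Rightarrow> op2 \<Rightarrow> real" where
  "Ent q U = (let R = opmult q (realign U) (opadj (realign U))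
              in 1 - Re (optrace q (opmult q R R)) / real q ^ 4)"

definition ep :: "nat \<Rightarrow> op2 \<Rightarrow> real" where
  "ep q U = (Ent q U + Ent q (opmult q U swap_op) - Ent q swap_op) / Ent q swap_op"

definition UC :: "nat \<Rightarrow> real \<Rightarrow> op2" where
  "UC q b = (\<lambda>(k, \<alpha>) (j, \<beta>).
     exp (2 * pi * \<i> / of_nat q * complex_of_real (b * real j * real \<beta> + real (k * \<beta> + j * \<alpha>)))
     / of_nat q)"

definition Dop :: "nat \<Rightarrow> real \<Rightarrow> op2" where
  "Dop q b = (\<lambda>(k, \<alpha>) (j, \<beta>).
     if k = j \<and> \<alpha> = \<beta> then exp (2 * pi * \<i> * complex_of_real (b * real j * real \<beta>) / of_nat q) else 0)"

end

theory Submission imports Defs begin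

definition ee :: "nat \<Rightarrow> real \<Rightarrow> complex" where
  "ee q x = exp (2 * pi * \<i> * complex_of_real x / of_nat q)"

lemma ee_add: "ee q (x + y) = ee q x * ee q y"
  unfolding ee_def by (simp add: exp_add[symmetric] add_divide_distrib distrib_left)

lemma cnj_ee: "cnj (ee q x) = ee q (- x)"
  unfolding ee_def by (simp add: exp_cnj)

lemma norm_ee [simp]: "norm (ee q x) = 1"
  unfolding ee_def by simp

lemma ee_zero [simp]: "ee q 0 = 1"
  unfolding ee_def by simp

lemma ee_diff: "ee q x * cnj (ee q y) = ee q (x - y)"
  by (simp add: cnj_ee ee_add[symmetric])

lemma ee_pow: "ee q (real j * x) = ee q x ^ j"
proof -
  have "2 * pi * \<i> * complex_of_real (real j * x) / of_nat q = of_nat j * (2 * pi * \<i> * complex_of_real x / of_nat q)"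
    by simp
  then show ?thesis unfolding ee_def by (simp only: exp_of_nat_mult)
qed

lemma ee_int_q: assumes "q > 0" shows "ee q (of_int d) ^ q = 1"
proof -
  have "ee q (of_int d) ^ q = ee q (real q * of_int d)" by (simp add: ee_pow)
  also have "\<dots> = exp ((2 * complex_of_int d * pi) * \<i>)"
    unfolding ee_def using assms by (simp add: field_simps)
  also have "\<dots> = 1" using exp_integer_2pi[of "of_int d"] by simp
  finally show ?thesis .
qed

lemma ee_int_ne1: assumes "0 < \<bar>d\<bar>" "\<bar>d\<bar> < int q" shows "ee q (of_int d) \<noteq> 1"
proof
  assume "ee q (of_int d) = 1"
  then obtain n :: int where n: "2 * pi * of_int d / real q = of_int (2 * n) * pi"
    unfolding ee_def exp_eq_1 by auto
  have "q > 0" using assms by auto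
  then have "real_of_int d = of_int n * real q" using n by (simp add: field_simps)
  then have "d = n * int q" by (metis of_int_eq_iff of_int_mult of_int_of_nat_eq)
  moreover have "n \<noteq> 0" using assms \<open>d = n * int q\<close> by auto
  then have "\<bar>n\<bar> * int q \<ge> 1 * int q" by (intro mult_right_mono) auto
  moreover have "\<bar>d\<bar> = \<bar>n\<bar> * int q" using \<open>d = n * int q\<close> by (simp add: abs_mult)
  ultimately show False using assms by linarith
qed

lemma ee_geom: assumes "0 < \<bar>d\<bar>" "\<bar>d\<bar> < int q"
  shows "(\<Sum>j\<in>{0..<q}. ee q (real j * of_int d)) = 0"
proof -
  have q: "q > 0" using assms by auto
  have "(\<Sum>j\<in>{0..<q}. ee q (real j * of_int d)) = (\<Sum>j<q. ee q (of_int d) ^ j)"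
    by (simp add: ee_pow lessThan_atLeast0)
  also have "\<dots> = 0" using geometric_sum[OF ee_int_ne1[OF assms]] ee_int_q[OF q] by simp
  finally show ?thesis .
qed

lemma idx_iff [simp]: "(a, b) \<in> idx q \<longleftrightarrow> a < q \<and> b < q"
  by (simp add: idx_def)

lemma finite_idx [simp]: "finite (idx q)"
  by (simp add: idx_def)

lemma sum_idx_split: "(\<Sum>(x,y)\<in>idx q. g x y) = (\<Sum>x\<in>{0..<q}. \<Sum>y\<in>{0..<q}. g x y)"
  unfolding idx_def by (simp add: sum.cartesian_product)

lemma sum_idx_y0:
  assumes "0 < \<bar>m\<bar>" "\<bar>m\<bar> < int q" "\<And>x y. F x y = f x + real y * of_int m"
  shows "(\<Sum>(x,y)\<in>idx q. ee q (F x y)) = 0"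
proof -
  have "(\<Sum>(x,y)\<in>idx q. ee q (F x y)) = (\<Sum>x\<in>{0..<q}. ee q (f x) * (\<Sum>y\<in>{0..<q}. ee q (real y * of_int m)))"
    by (simp add: sum_idx_split assms(3) ee_add sum_distrib_left)
  also have "\<dots> = 0" by (simp add: ee_geom[OF assms(1,2)])
  finally show ?thesis .
qed

lemma sum_idx_x0:
  assumes "0 < \<bar>m\<bar>" "\<bar>m\<bar> < int q" "\<And>x y. F x y = real x * of_int m + g y"
  shows "(\<Sum>(x,y)\<in>idx q. ee q (F x y)) = 0"
proof -
  have "(\<Sum>(x,y)\<in>idx q. ee q (F x y)) = (\<Sum>x\<in>{0..<q}. ee q (real x * of_int m)) * (\<Sum>y\<in>{0..<q}. ee q (g y))"
    by (simp add: sum_idx_split assms(3) ee_add sum_product)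
  also have "\<dots> = 0" by (simp add: ee_geom[OF assms(1,2)])
  finally show ?thesis .
qed

lemma sum_idx_const0:
  assumes "\<And>x y. F x y = 0" "q > 0"
  shows "(\<Sum>(x,y)\<in>idx q. ee q (F x y)) / (of_nat q)^2 = 1"
  using assms by (simp add: idx_def card_cartesian_product power2_eq_square)

lemma UC_ee: "UC q b (k, \<alpha>) (j, \<beta>) = ee q (b * real j * real \<beta> + real k * real \<beta> + real j * real \<alpha>) / of_nat q"
  unfolding UC_def ee_def by (simp add: field_simps)

lemma prod_ee: assumes h: "X - Y = Z" shows "(ee q X / of_nat q) * cnj (ee q Y / of_nat q) = ee q Z / (of_nat q)^2"
  by (simp add: ee_diff power2_eq_square flip: h)

lemma prod_ee': "Y - X = Z \<Longrightarrow> cnj (ee q X / of_nat q) * (ee q Y / of_nat q) = ee q Z / (of_nat q)^2"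
  using prod_ee[of Y X Z q] by (simp add: mult.commute)

lemma opentry:
  assumes "\<And>j \<beta>. j < q \<Longrightarrow> \<beta> < q \<Longrightarrow> g (j, \<beta>) = ee q (F j \<beta>) / (of_nat q)^2"
  shows "(\<Sum>c\<in>idx q. g c) = (\<Sum>(j,\<beta>)\<in>idx q. ee q (F j \<beta>)) / (of_nat q)^2"
  by (simp add: sum_divide_distrib case_prod_beta, rule sum.cong) (auto simp: assms idx_def)

lemma UC_UUd:
  assumes "k < q" "\<alpha> < q" "k' < q" "\<alpha>' < q"
  shows "opmult q (UC q b) (opadj (UC q b)) (k, \<alpha>) (k', \<alpha>') = opid (k, \<alpha>) (k', \<alpha>')"
proof -
  define F where "F = (\<lambda>j \<beta>. real \<beta> * of_int (int k - int k') + real j * of_int (int \<alpha> - int \<alpha>'))"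
  have "opmult q (UC q b) (opadj (UC q b)) (k, \<alpha>) (k', \<alpha>') = (\<Sum>(j,\<beta>)\<in>idx q. ee q (F j \<beta>)) / (of_nat q)^2"
    unfolding opmult_def opadj_def
    by (rule opentry, simp only: UC_ee, rule prod_ee) (simp add: F_def algebra_simps)
  also have "\<dots> = opid (k, \<alpha>) (k', \<alpha>')"
  proof (cases "k = k'")
    case False
    have "(\<Sum>(j,\<beta>)\<in>idx q. ee q (F j \<beta>)) = 0"
      by (rule sum_idx_y0[where m="int k - int k'" and f="\<lambda>j. real j * of_int (int \<alpha> - int \<alpha>')"])
         (use False assms in \<open>auto simp: F_def\<close>)
    then show ?thesis using False by (simp add: opid_def)
  next
    case True
    show ?thesis
    proof (cases "\<alpha> = \<alpha>'")
      case False
      have "(\<Sum>(j,\<beta>)\<in>idx q. ee q (F j \<beta>)) = 0"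
        by (rule sum_idx_x0[where m="int \<alpha> - int \<alpha>'" and g="\<lambda>_. 0"])
           (use False True assms in \<open>auto simp: F_def\<close>)
      then show ?thesis using False by (simp add: opid_def)
    next
      case True2: True
      show ?thesis using True True2 assms by (subst sum_idx_const0) (auto simp: F_def opid_def)
    qed
  qed
  finally show ?thesis .
qed

lemma UC_UdU:
  assumes "j < q" "\<beta> < q" "j' < q" "\<beta>' < q"
  shows "opmult q (opadj (UC q b)) (UC q b) (j, \<beta>) (j', \<beta>') = opid (j, \<beta>) (j', \<beta>')"
proof -
  define F where "F = (\<lambda>k \<alpha>. (b * (real j' * real \<beta>' - real j * real \<beta>) + real k * of_int (int \<beta>' - int \<beta>)) + real \<alpha> * of_int (int j' - int j))"
  have "opmult q (opadj (UC q b)) (UC q b) (j, \<beta>) (j', \<beta>') = (\<Sum>(k,\<alpha>)\<in>idx q. ee q (F k \<alpha>)) / (of_nat q)^2"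
    unfolding opmult_def opadj_def
    by (rule opentry, simp only: UC_ee, rule prod_ee') (simp add: F_def algebra_simps)
  also have "\<dots> = opid (j, \<beta>) (j', \<beta>')"
  proof (cases "j = j'")
    case False
    have "(\<Sum>(k,\<alpha>)\<in>idx q. ee q (F k \<alpha>)) = 0"
      by (rule sum_idx_y0[where m="int j' - int j" and f="\<lambda>k. b * (real j' * real \<beta>' - real j * real \<beta>) + real k * of_int (int \<beta>' - int \<beta>)"])
         (use False assms in \<open>auto simp: F_def\<close>)
    then show ?thesis using False by (simp add: opid_def)
  next
    case True
    show ?thesis
    proof (cases "\<beta> = \<beta>'")
      case False
      have "(\<Sum>(k,\<alpha>)\<in>idx q. ee q (F k \<alpha>)) = 0"
        by (rule sum_idx_x0[where m="int \<beta>' - int \<beta>" and g="\<lambda>_. b * (real j' * real \<beta>' - real j * real \<beta>)"])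
           (use False True assms in \<open>auto simp: F_def\<close>)
      then show ?thesis using False by (simp add: opid_def)
    next
      case True2: True
      show ?thesis using True True2 assms by (subst sum_idx_const0) (auto simp: F_def opid_def)
    qed
  qed
  finally show ?thesis .
qed

lemma realign_apply: "realign X (\<beta>, \<alpha>) (j, i) = X (i, \<alpha>) (j, \<beta>)"
  by (simp add: realign_def)

lemma UC_RRd:
  assumes "\<beta> < q" "\<alpha> < q" "\<beta>' < q" "\<alpha>' < q"
  shows "opmult q (realign (UC q b)) (opadj (realign (UC q b))) (\<beta>, \<alpha>) (\<beta>', \<alpha>') = opid (\<beta>, \<alpha>) (\<beta>', \<alpha>')"
proof -
  define F where "F = (\<lambda>j k. (b * real j * of_int (int \<beta> - int \<beta>') + real j * of_int (int \<alpha> - int \<alpha>')) + real k * of_int (int \<beta> - int \<beta>'))"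
  have "opmult q (realign (UC q b)) (opadj (realign (UC q b))) (\<beta>, \<alpha>) (\<beta>', \<alpha>') = (\<Sum>(j,k)\<in>idx q. ee q (F j k)) / (of_nat q)^2"
    unfolding opmult_def opadj_def
    by (rule opentry, simp only: realign_apply UC_ee, rule prod_ee) (simp add: F_def algebra_simps)
  also have "\<dots> = opid (\<beta>, \<alpha>) (\<beta>', \<alpha>')"
  proof (cases "\<beta> = \<beta>'")
    case False
    have "(\<Sum>(j,k)\<in>idx q. ee q (F j k)) = 0"
      by (rule sum_idx_y0[where m="int \<beta> - int \<beta>'" and f="\<lambda>j. b * real j * of_int (int \<beta> - int \<beta>') + real j * of_int (int \<alpha> - int \<alpha>')"])
         (use False assms in \<open>auto simp: F_def\<close>)
    then show ?thesis using False by (simp add: opid_def)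
  next
    case True
    show ?thesis
    proof (cases "\<alpha> = \<alpha>'")
      case False
      have "(\<Sum>(j,k)\<in>idx q. ee q (F j k)) = 0"
        by (rule sum_idx_x0[where m="int \<alpha> - int \<alpha>'" and g="\<lambda>_. 0"])
           (use False True assms in \<open>auto simp: F_def\<close>)
      then show ?thesis using False by (simp add: opid_def)
    next
      case True2: True
      show ?thesis using True True2 assms by (subst sum_idx_const0) (auto simp: F_def opid_def)
    qed
  qed
  finally show ?thesis .
qed

lemma UC_RdR:
  assumes "j < q" "k < q" "j' < q" "k' < q"
  shows "opmult q (opadj (realign (UC q b))) (realign (UC q b)) (j, k) (j', k') = opid (j, k) (j', k')"
proof -
  define F where "F = (\<lambda>\<beta> \<alpha>. (b * real \<beta> * of_int (int j' - int j) + real \<beta> * of_int (int k' - int k)) + real \<alpha> * of_int (int j' - int j))"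
  have "opmult q (opadj (realign (UC q b))) (realign (UC q b)) (j, k) (j', k') = (\<Sum>(\<beta>,\<alpha>)\<in>idx q. ee q (F \<beta> \<alpha>)) / (of_nat q)^2"
    unfolding opmult_def opadj_def
    by (rule opentry, simp only: realign_apply UC_ee, rule prod_ee') (simp add: F_def algebra_simps)
  also have "\<dots> = opid (j, k) (j', k')"
  proof (cases "j = j'")
    case False
    have "(\<Sum>(\<beta>,\<alpha>)\<in>idx q. ee q (F \<beta> \<alpha>)) = 0"
      by (rule sum_idx_y0[where m="int j' - int j" and f="\<lambda>\<beta>. b * real \<beta> * of_int (int j' - int j) + real \<beta> * of_int (int k' - int k)"])
         (use False assms in \<open>auto simp: F_def\<close>)
    then show ?thesis using False by (simp add: opid_def)
  next
    case True
    show ?thesis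
    proof (cases "k = k'")
      case False
      have "(\<Sum>(\<beta>,\<alpha>)\<in>idx q. ee q (F \<beta> \<alpha>)) = 0"
        by (rule sum_idx_x0[where m="int k' - int k" and g="\<lambda>_. 0"])
           (use False True assms in \<open>auto simp: F_def\<close>)
      then show ?thesis using False by (simp add: opid_def)
    next
      case True2: True
      show ?thesis using True True2 assms by (subst sum_idx_const0) (auto simp: F_def opid_def)
    qed
  qed
  finally show ?thesis .
qed

lemma UC_dual: "dual_unitary q (UC q b)"
  unfolding dual_unitary_def unitary_op_def opeq_def
  using UC_UUd UC_UdU UC_RRd UC_RdR by (auto simp: idx_def)

lemma swap_col: "swap_op c (j, \<beta>) = (if c = (\<beta>, j) then 1 else 0)"
  by (cases c) (auto simp: swap_op_def)

lemma swap_row: "swap_op (i, \<alpha>) c = (if c = (\<alpha>, i) then 1 else 0)"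
  by (cases c) (auto simp: swap_op_def)

lemma mult_swap: assumes "j < q" "\<beta> < q" shows "opmult q X swap_op a (j, \<beta>) = X a (\<beta>, j)"
proof -
  have "opmult q X swap_op a (j, \<beta>) = (\<Sum>c\<in>idx q. if c = (\<beta>, j) then X a c else 0)"
    unfolding opmult_def by (rule sum.cong) (auto simp: swap_col)
  also have "\<dots> = X a (\<beta>, j)" using assms by (simp add: sum.delta)
  finally show ?thesis .
qed

lemma realign_swap: "realign swap_op = swap_op"
  unfolding realign_def swap_op_def by (auto simp: fun_eq_iff)

lemma swap_unitary: "unitary_op q swap_op"
proof -
  have 1: "opmult q swap_op (opadj swap_op) (i, \<alpha>) c = opid (i, \<alpha>) c" if "(i, \<alpha>) \<in> idx q" "c \<in> idx q" for i \<alpha> c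
  proof -
    have "opmult q swap_op (opadj swap_op) (i, \<alpha>) c = (\<Sum>d\<in>idx q. if d = (\<alpha>, i) then cnj (swap_op c (\<alpha>, i)) else 0)"
      unfolding opmult_def opadj_def by (rule sum.cong) (auto simp: swap_row)
    also have "\<dots> = opid (i, \<alpha>) c" using that by (cases c) (auto simp: sum.delta swap_col opid_def)
    finally show ?thesis .
  qed
  have 2: "opmult q (opadj swap_op) swap_op (i, \<alpha>) c = opid (i, \<alpha>) c" if "(i, \<alpha>) \<in> idx q" "c \<in> idx q" for i \<alpha> c
  proof -
    have "opmult q (opadj swap_op) swap_op (i, \<alpha>) c = (\<Sum>d\<in>idx q. if d = (\<alpha>, i) then swap_op (\<alpha>, i) c else 0)"
      unfolding opmult_def opadj_def by (rule sum.cong) (auto simp: swap_col)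
    also have "\<dots> = opid (i, \<alpha>) c" using that by (cases c) (auto simp: sum.delta swap_row opid_def)
    finally show ?thesis .
  qed
  show ?thesis unfolding unitary_op_def opeq_def using 1 2 by auto
qed

lemma card_idx: "card (idx q) = q * q"
  by (simp add: idx_def card_cartesian_product)

lemma Ent_unit: assumes "unitary_op q (realign V)" "q > 0" shows "Ent q V = 1 - 1 / real q ^ 2"
proof -
  define M where "M = opmult q (realign V) (opadj (realign V))"
  have M: "M a c = opid a c" if "a \<in> idx q" "c \<in> idx q" for a c
    using assms(1) that unfolding M_def unitary_op_def opeq_def by auto
  have "optrace q (opmult q M M) = (\<Sum>a\<in>idx q. \<Sum>c\<in>idx q. if a = c then 1 else 0)"
    unfolding optrace_def opmult_def by (intro sum.cong refl) (auto simp: M opid_def)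
  also have "\<dots> = of_nat (q * q)" by (simp add: sum.delta card_idx)
  finally have "optrace q (opmult q M M) = of_nat (q * q)" .
  then show ?thesis unfolding Ent_def M_def[symmetric] Let_def using assms(2)
    by (simp add: power2_eq_square field_simps eval_nat_numeral)
qed

lemma herm: "opmult q X (opadj X) c a = cnj (opmult q X (opadj X) a c)"
  unfolding opmult_def opadj_def by (simp add: mult.commute)

lemma Re_mult_cnj: "Re (z * cnj z) = norm z ^ 2"
  by (simp add: complex_mult_cnj cmod_power2)

definition MUS :: "nat \<Rightarrow> real \<Rightarrow> op2" where
  "MUS q b = opmult q (realign (opmult q (UC q b) swap_op)) (opadj (realign (opmult q (UC q b) swap_op)))"

lemma MUS_sum:
  assumes "\<beta> < q" "\<alpha> < q" "\<beta>' < q" "\<alpha>' < q"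
  shows "MUS q b (\<beta>, \<alpha>) (\<beta>', \<alpha>') = (\<Sum>(j,k)\<in>idx q. ee q (b * real j * of_int (int \<beta> - int \<beta>') + (real \<beta> * real \<alpha> - real \<beta>' * real \<alpha>'))) / (of_nat q)^2"
  unfolding MUS_def opmult_def[of q "realign _"] opadj_def
  by (rule opentry, simp only: realign_apply mult_swap assms UC_ee, rule prod_ee) (simp add: algebra_simps)

lemma MUS_same:
  assumes "\<beta> < q" "\<alpha> < q" "\<alpha>' < q"
  shows "norm (MUS q b (\<beta>, \<alpha>) (\<beta>, \<alpha>')) = 1"
proof -
  have q: "q > 0" using assms by auto
  have "MUS q b (\<beta>, \<alpha>) (\<beta>, \<alpha>') = (\<Sum>(j,k)\<in>idx q. ee q (real \<beta> * real \<alpha> - real \<beta> * real \<alpha>')) / (of_nat q)^2"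
    using MUS_sum[OF assms(1,2,1,3)] by simp
  also have "\<dots> = ee q (real \<beta> * real \<alpha> - real \<beta> * real \<alpha>')"
    using q by (simp add: card_idx power2_eq_square case_prod_beta)
  finally show ?thesis by simp
qed

lemma MUS_b1:
  assumes "\<beta> < q" "\<alpha> < q" "\<beta>' < q" "\<alpha>' < q" "\<beta> \<noteq> \<beta>'"
  shows "MUS q 1 (\<beta>, \<alpha>) (\<beta>', \<alpha>') = 0"
proof -
  have "(\<Sum>(j,k)\<in>idx q. ee q (1 * real j * of_int (int \<beta> - int \<beta>') + (real \<beta> * real \<alpha> - real \<beta>' * real \<alpha>'))) = 0"
    by (rule sum_idx_x0[where m="int \<beta> - int \<beta>'" and g="\<lambda>_. real \<beta> * real \<alpha> - real \<beta>' * real \<alpha>'"])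
       (use assms in auto)
  then show ?thesis using MUS_sum[OF assms(1-4), of 1] by simp
qed

lemma MUS_bound:
  assumes "a \<in> idx q" "c \<in> idx q"
  shows "norm (MUS q b a c) ^ 2 \<ge> (if fst a = fst c then 1 else 0)"
    and "norm (MUS q 1 a c) ^ 2 = (if fst a = fst c then 1 else 0)"
  using assms MUS_same MUS_b1 by (cases a; cases c; auto)+

lemma ind_sum: "(\<Sum>a\<in>idx q. \<Sum>c\<in>idx q. if fst a = fst c then 1 else 0::real) = real q ^ 3"
proof -
  have "(\<Sum>c\<in>idx q. if fst a = fst c then 1 else 0::real) = real q" if "a \<in> idx q" for a
  proof -
    have "(\<Sum>c\<in>idx q. if fst a = fst c then 1 else 0::real) = (\<Sum>(x,y)\<in>idx q. if fst a = x then 1 else 0)"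
      by (rule sum.cong) auto
    also have "\<dots> = real q" using that by (cases a) (simp add: sum_idx_split sum.delta sum_distrib_left[symmetric])
    finally show ?thesis .
  qed
  then have "(\<Sum>a\<in>idx q. \<Sum>c\<in>idx q. if fst a = fst c then 1 else 0::real) = (\<Sum>a\<in>idx q. real q)"
    by (rule sum.cong[OF refl])
  also have "\<dots> = real q ^ 3" by (simp add: card_idx power3_eq_cube)
  finally show ?thesis .
qed

lemma trace_MUS: "Re (optrace q (opmult q (MUS q b) (MUS q b))) = (\<Sum>a\<in>idx q. \<Sum>c\<in>idx q. norm (MUS q b a c) ^ 2)"
proof -
  have h: "MUS q b c a = cnj (MUS q b a c)" for a c unfolding MUS_def by (rule herm)
  have "optrace q (opmult q (MUS q b) (MUS q b)) = (\<Sum>a\<in>idx q. \<Sum>c\<in>idx q. MUS q b a c * cnj (MUS q b a c))"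
    unfolding optrace_def opmult_def[of q "MUS q b"] by (intro sum.cong refl) (rule arg_cong2[where f=times, OF refl h])
  then show ?thesis by (simp only: Re_sum Re_mult_cnj)
qed

lemma dft_ee: "dft q m n = ee q (real m * real n) / complex_of_real (sqrt (real q))"
  unfolding dft_def ee_def by simp

lemma Dop_col: "Dop q b c (j, \<beta>) = (if c = (j, \<beta>) then ee q (b * real j * real \<beta>) else 0)"
  by (cases c) (auto simp: Dop_def ee_def)

lemma factor:
  assumes "k < q" "\<alpha> < q" "j < q" "\<beta> < q"
  shows "UC q b (k, \<alpha>) (j, \<beta>) = opmult q (opmult q (tensor_op (dft q) (dft q)) swap_op) (Dop q b) (k, \<alpha>) (j, \<beta>)"
proof -
  let ?X = "opmult q (tensor_op (dft q) (dft q)) swap_op"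
  have "opmult q ?X (Dop q b) (k, \<alpha>) (j, \<beta>) = (\<Sum>c\<in>idx q. if c = (j, \<beta>) then ?X (k, \<alpha>) (j, \<beta>) * ee q (b * real j * real \<beta>) else 0)"
    unfolding opmult_def[of q ?X] by (rule sum.cong) (auto simp: Dop_col)
  also have "\<dots> = ?X (k, \<alpha>) (j, \<beta>) * ee q (b * real j * real \<beta>)"
    using assms by (simp add: sum.delta)
  also have "?X (k, \<alpha>) (j, \<beta>) = dft q k \<beta> * dft q \<alpha> j"
    using assms by (simp add: mult_swap tensor_op_def)
  also have "dft q k \<beta> * dft q \<alpha> j * ee q (b * real j * real \<beta>) = UC q b (k, \<alpha>) (j, \<beta>)"
  proof -
    have s: "complex_of_real (sqrt (real q)) * complex_of_real (sqrt (real q)) = of_nat q"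
      by (simp flip: of_real_mult)
    have "UC q b (k, \<alpha>) (j, \<beta>) = ee q (b * real j * real \<beta>) * ee q (real k * real \<beta>) * ee q (real \<alpha> * real j) / of_nat q"
      by (simp add: UC_ee ee_add[symmetric] algebra_simps)
    then show ?thesis by (simp add: dft_ee s[symmetric] field_simps)
  qed
  finally show ?thesis by simp
qed

lemma ep_ineq:
  fixes Q T :: real
  assumes "Q \<ge> 2" "T \<ge> Q ^ 3"
  shows "(1 - T / Q ^ 4) / (1 - 1 / Q ^ 2) \<le> Q / (Q + 1)"
    and "T = Q ^ 3 \<Longrightarrow> (1 - T / Q ^ 4) / (1 - 1 / Q ^ 2) = Q / (Q + 1)"
proof -
  have Q0: "Q \<noteq> 0" "Q - 1 \<noteq> 0" "Q + 1 \<noteq> 0" using assms(1) by auto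
  have Q2: "Q ^ 2 > 1" using assms(1) mult_mono[of 2 Q 2 Q] by (simp add: power2_eq_square)
  have pos: "1 - 1 / Q ^ 2 > 0" using Q2 by (simp add: divide_less_eq)
  have a: "Q ^ 3 / Q ^ 4 = 1 / Q" using Q0 by (simp add: eval_nat_numeral)
  have b: "1 - 1 / Q ^ 2 = (Q - 1) * (Q + 1) / Q ^ 2" using Q0 by (simp add: field_simps power2_eq_square)
  have c: "1 - 1 / Q = (Q - 1) / Q" using Q0 by (simp add: field_simps)
  have eq: "(1 - Q ^ 3 / Q ^ 4) / (1 - 1 / Q ^ 2) = Q / (Q + 1)"
  proof -
    have "Q * (Q * Q) - Q = Q * ((Q - 1) * (Q + 1))" by algebra
    then have D: "Q * (Q * Q) - Q \<noteq> 0" using Q0 by simp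
    have "(Q * (Q * (Q * Q)) - Q * Q) = Q * (Q * (Q * Q) - Q)" by algebra
    then show ?thesis unfolding a b c using Q0 D by (simp add: field_simps power2_eq_square)
  qed
  have "T / Q ^ 4 \<ge> Q ^ 3 / Q ^ 4" using assms by (intro divide_right_mono) auto
  then have "(1 - T / Q ^ 4) / (1 - 1 / Q ^ 2) \<le> (1 - Q ^ 3 / Q ^ 4) / (1 - 1 / Q ^ 2)"
    using pos by (intro divide_right_mono) auto
  then show "(1 - T / Q ^ 4) / (1 - 1 / Q ^ 2) \<le> Q / (Q + 1)" using eq by simp
  show "T = Q ^ 3 \<Longrightarrow> (1 - T / Q ^ 4) / (1 - 1 / Q ^ 2) = Q / (Q + 1)" using eq by simp
qed

lemma Ent_US: "Ent q (opmult q (UC q b) swap_op) = 1 - Re (optrace q (opmult q (MUS q b) (MUS q b))) / real q ^ 4"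
  unfolding Ent_def Let_def MUS_def ..

theorem mainTheorem9:
  fixes q :: nat and b :: real
  assumes "q \<ge> 2"
  shows "opeq q (UC q b) (opmult q (opmult q (tensor_op (dft q) (dft q)) swap_op) (Dop q b))
         \<and> dual_unitary q (UC q b)
         \<and> ep q (UC q b) \<le> real q / (real q + 1)
         \<and> ep q (UC q 1) = real q / (real q + 1)"
proof -
  have q: "q > 0" using assms by auto
  have Q: "real q \<ge> 2" using assms by simp
  have P1: "opeq q (UC q b) (opmult q (opmult q (tensor_op (dft q) (dft q)) swap_op) (Dop q b))"
    unfolding opeq_def using factor by (auto simp: idx_def)
  have ES: "Ent q swap_op = 1 - 1 / real q ^ 2"
    by (rule Ent_unit[OF _ q]) (simp add: realign_swap swap_unitary)
  have EU: "Ent q (UC q c) = 1 - 1 / real q ^ 2" for c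
    by (rule Ent_unit[OF _ q]) (use UC_dual in \<open>simp add: dual_unitary_def\<close>)
  have ep_eq: "ep q (UC q c) = (1 - Re (optrace q (opmult q (MUS q c) (MUS q c))) / real q ^ 4) / (1 - 1 / real q ^ 2)" for c
    unfolding ep_def ES EU Ent_US by simp
  have T: "Re (optrace q (opmult q (MUS q b) (MUS q b))) \<ge> real q ^ 3"
  proof -
    have "real q ^ 3 = (\<Sum>a\<in>idx q. \<Sum>c\<in>idx q. if fst a = fst c then 1 else 0::real)" by (simp add: ind_sum)
    also have "\<dots> \<le> (\<Sum>a\<in>idx q. \<Sum>c\<in>idx q. norm (MUS q b a c) ^ 2)"
      by (intro sum_mono MUS_bound(1))
    finally show ?thesis by (simp add: trace_MUS)
  qed
  have T1: "Re (optrace q (opmult q (MUS q 1) (MUS q 1))) = real q ^ 3"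
  proof -
    have "(\<Sum>a\<in>idx q. \<Sum>c\<in>idx q. norm (MUS q 1 a c) ^ 2) = (\<Sum>a\<in>idx q. \<Sum>c\<in>idx q. if fst a = fst c then 1 else 0::real)"
      by (intro sum.cong refl MUS_bound(2))
    then show ?thesis by (simp add: trace_MUS ind_sum)
  qed
  show ?thesis
    using P1 UC_dual ep_ineq(1)[OF Q T] ep_ineq(2)[OF Q _ T1] T1 unfolding ep_eq by simp
qed

end
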